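(* Let $S$ be of the form $S_t=\sum_{-r<s\le t}(\Delta L_s)^2$ with $\mathbb E[L_1^4]<\infty$, and let $X$ be the unique solution to $dX_t=(\eta-c_\mu X_t+\xi(X)_t)\,dt+c_\nu X_{t-}\,dS_t$, $t\ge0$, where $\xi(X)_t=\int_{-p}^0 f_\mu(u)X_{t+u}\,du+\int_{-q+}^0 f_\nu(u)X_{t+u-}\,dS_{t+u}$. Suppose $\eta>0$, $c_\mu>\|f_\mu\|_{L^1}$ and $X_u\ge x^-:=\eta/(c_\mu-\|f_\mu\|_{L^1})$ for all $u\in[-r,0]$. Then for each $t>0$, $X_t\ge x^-$ almost surely; in particular $X_t$ is positive and bounded away from zero by $x^-$.
   Context: Let $p,q\ge0$, $r:=p\vee q$, $(\Omega,\mathcal F,\mathbb F=(\mathcal F_t)_{t\ge-r},\mathbb P)$ a filtered probability space with the usual conditions, and $(L_t)_{t\ge-r}$ a càdlàg adapted centered Lévy process with $L_{-r}=0$ and increments independent of the past and stationary. Parameters: $c_\nu>0$, $f_\mu,f_\nu$ nonnegative continuous functions supported on $[-p,0]$ and $[-q,0]$. The initial condition $X=\Phi$ on $[-r,0]$ is a càdlàg process adapted to the natural filtration of $L$ with $\mathbb E[\sup_{[-r,0]}|\Phi|^2]<\infty$; the solution is the unique adapted càdlàg process with $\mathbb E[\sup_{s\in[-r,t]}|X_s|^2]<\infty$ for all $t$. *)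

theory Defs
  imports "HOL-Probability.Probability"
begin

definition left_lim :: "(real \<Rightarrow> real) \<Rightarrow> real \<Rightarrow> real" where
  "left_lim f t = Lim (at_left t) f"

definition jump :: "(real \<Rightarrow> real) \<Rightarrow> real \<Rightarrow> real" where
  "jump f t = f t - left_lim f t"

definition cadlag_from :: "real \<Rightarrow> (real \<Rightarrow> real) \<Rightarrow> bool" where
  "cadlag_from a f \<longleftrightarrow>
     (\<forall>t\<ge>a. continuous (at_right t) f \<and> (t > a \<longrightarrow> (\<exists>l. (f \<longlongrightarrow> l) (at_left t))))"

definition sq_jump_sum :: "real \<Rightarrow> (real \<Rightarrow> real) \<Rightarrow> real \<Rightarrow> real" where
  "sq_jump_sum a l t = infsum (\<lambda>s. (jump l s)\<^sup>2) {a<..t}"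

definition stieltjes_int :: "(real \<Rightarrow> real) \<Rightarrow> real \<Rightarrow> real \<Rightarrow> (real \<Rightarrow> real) \<Rightarrow> real" where
  "stieltjes_int S a b g = set_lebesgue_integral (interval_measure S) {a<..b} g"

definition usual_filtration :: "'a measure \<Rightarrow> (real \<Rightarrow> 'a measure) \<Rightarrow> real \<Rightarrow> bool" where
  "usual_filtration M F a \<longleftrightarrow>
     (\<forall>t\<ge>a. subalgebra M (F t)) \<and>
     (\<forall>s t. a \<le> s \<longrightarrow> s \<le> t \<longrightarrow> sets (F s) \<subseteq> sets (F t)) \<and>
     (\<forall>t\<ge>a. sets (F t) = (\<Inter>u\<in>{t<..}. sets (F u))) \<and>
     (\<forall>N. N \<subseteq> space M \<longrightarrow> (\<exists>A\<in>null_sets M. N \<subseteq> A) \<longrightarrow> N \<in> sets (F a))"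

definition adapted_proc :: "(real \<Rightarrow> 'a measure) \<Rightarrow> real \<Rightarrow> ('a \<Rightarrow> real \<Rightarrow> real) \<Rightarrow> bool" where
  "adapted_proc F a X \<longleftrightarrow> (\<forall>t\<ge>a. (\<lambda>\<omega>. X \<omega> t) \<in> borel_measurable (F t))"

definition levy_process :: "'a measure \<Rightarrow> (real \<Rightarrow> 'a measure) \<Rightarrow> real \<Rightarrow> ('a \<Rightarrow> real \<Rightarrow> real) \<Rightarrow> bool" where
  "levy_process M F a L \<longleftrightarrow>
     adapted_proc F a L \<and>
     (\<forall>\<omega>\<in>space M. L \<omega> a = 0 \<and> cadlag_from a (L \<omega>)) \<and>
     \<comment> \<open>increments independent of the past\<close>
     (\<forall>s t. a \<le> s \<longrightarrow> s \<le> t \<longrightarrow> (\<forall>A\<in>sets (F s). \<forall>B\<in>sets borel.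
        measure M (A \<inter> {\<omega>\<in>space M. L \<omega> t - L \<omega> s \<in> B}) =
        measure M A * measure M {\<omega>\<in>space M. L \<omega> t - L \<omega> s \<in> B})) \<and>
     \<comment> \<open>stationary increments\<close>
     (\<forall>s t. a \<le> s \<longrightarrow> s \<le> t \<longrightarrow>
        distr M borel (\<lambda>\<omega>. L \<omega> t - L \<omega> s) = distr M borel (\<lambda>\<omega>. L \<omega> (a + (t - s)) - L \<omega> a))"

definition centered_proc :: "'a measure \<Rightarrow> real \<Rightarrow> ('a \<Rightarrow> real \<Rightarrow> real) \<Rightarrow> bool" where
  "centered_proc M a L \<longleftrightarrow>
     (\<forall>t\<ge>a. integrable M (\<lambda>\<omega>. L \<omega> t) \<and> (\<integral>\<omega>. L \<omega> t \<partial>M) = 0)"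

definition nat_filtration :: "'a measure \<Rightarrow> ('a \<Rightarrow> real \<Rightarrow> real) \<Rightarrow> real \<Rightarrow> real \<Rightarrow> 'a measure" where
  "nat_filtration M L a u =
     sigma (space M) {(\<lambda>\<omega>. L \<omega> s) -` B \<inter> space M | s B. s \<in> {a..u} \<and> B \<in> sets borel}"

text \<open>xi(x)_s = int_{-p}^0 f_mu(u) x(s+u) du + int_{(-q,0]} f_nu(u) x((s+u)-) dS_{s+u},
  the second integral written after the substitution v = s+u as an integral over (s-q, s] w.r.t. dS_v.\<close>
definition xi_term :: "(real \<Rightarrow> real) \<Rightarrow> (real \<Rightarrow> real) \<Rightarrow> real \<Rightarrow> real \<Rightarrow> (real \<Rightarrow> real)
                       \<Rightarrow> (real \<Rightarrow> real) \<Rightarrow> real \<Rightarrow> real" where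
  "xi_term f_mu f_nu p q S x s =
     (LINT u:{-p..0}|lborel. f_mu u * x (s + u)) +
     stieltjes_int S (s - q) s (\<lambda>v. f_nu (v - s) * left_lim x v)"

definition solves_path :: "real \<Rightarrow> real \<Rightarrow> real \<Rightarrow> (real \<Rightarrow> real) \<Rightarrow> (real \<Rightarrow> real) \<Rightarrow> real \<Rightarrow> real
                          \<Rightarrow> (real \<Rightarrow> real) \<Rightarrow> (real \<Rightarrow> real) \<Rightarrow> bool" where
  "solves_path eta c_mu c_nu f_mu f_nu p q S x \<longleftrightarrow>
     (\<forall>t\<ge>0. x t = x 0 + (LINT s:{0..t}|lborel. eta - c_mu * x s + xi_term f_mu f_nu p q S x s)
                 + c_nu * stieltjes_int S 0 t (\<lambda>v. left_lim x v))"

end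

theory Submission
  imports Defs
begin
lemma im_fin: "emeasure (interval_measure F) {a<..b} < \<infinity>"
proof (cases "a \<le> b")
  case False then show ?thesis by simp
next
  case ab: True
  let ?I = "{(a::real, b). a \<le> b}" and ?G = "\<lambda>(a, b). {a<..b::real}" and ?m = "\<lambda>(a, b). ennreal (F b - F a)"
  show ?thesis
  proof (cases "\<exists>\<mu>'. (\<forall>i\<in>?I. \<mu>' (?G i) = ?m i) \<and> measure_space UNIV (sigma_sets UNIV (?G`?I)) \<mu>'")
    case True
    then obtain \<mu>' where m: "\<forall>i\<in>?I. \<mu>' (?G i) = ?m i" "measure_space UNIV (sigma_sets UNIV (?G`?I)) \<mu>'" by blast
    have s: "sets (interval_measure F) = sigma_sets UNIV (?G`?I)"
      unfolding interval_measure_def by (rule sets_extend_measure) auto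
    have "emeasure (interval_measure F) (?G (a,b)) = ?m (a,b)"
      apply (rule emeasure_extend_measure[OF interval_measure_def])
      using m ab unfolding measure_space_def s by auto
    then show ?thesis by simp
  next
    case False
    then have "interval_measure F = measure_of UNIV (?G`?I) (\<lambda>_. 0)"
      unfolding interval_measure_def extend_measure_def by auto
    then show ?thesis by (simp add: emeasure_sigma)
  qed
qed

lemma rc_measurable:
  fixes y :: "real \<Rightarrow> real"
  assumes rc: "\<And>t. continuous (at_right t) y"
  shows "y \<in> borel_measurable borel"
proof (rule borel_measurable_LIMSEQ_real)
  fix n :: nat
  have "(\<lambda>t. y (real_of_int \<lceil>real (Suc n) * t\<rceil> / real (Suc n))) = (\<lambda>k. y (real_of_int k / real (Suc n))) \<circ> (\<lambda>t. \<lceil>real (Suc n) * t\<rceil>)"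
    by auto
  also have "\<dots> \<in> borel_measurable borel"
    by (rule measurable_comp[where N="count_space UNIV"]) auto
  finally show "(\<lambda>t. y (real_of_int \<lceil>real (Suc n) * t\<rceil> / real (Suc n))) \<in> borel_measurable borel" .
next
  fix t :: real
  show "(\<lambda>n. y (real_of_int \<lceil>real (Suc n) * t\<rceil> / real (Suc n))) \<longlonglongrightarrow> y t"
  proof (rule LIMSEQ_I)
    fix e :: real assume "e > 0"
    have lim: "(y \<longlongrightarrow> y t) (at_right t)" using rc[of t] by (simp add: continuous_within)
    have "eventually (\<lambda>u. dist (y u) (y t) < e) (at_right t)" using tendstoD[OF lim \<open>e>0\<close>] .
    then obtain b where b: "b > t" "\<And>u. u > t \<Longrightarrow> u < b \<Longrightarrow> dist (y u) (y t) < e"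
      by (auto simp: eventually_at_right_field)
    obtain N :: nat where N: "1 / real (Suc N) < b - t"
      using b(1) by (metis diff_gt_0_iff_gt nat_approx_posE)
    show "\<exists>N. \<forall>n\<ge>N. norm (y (real_of_int \<lceil>real (Suc n) * t\<rceil> / real (Suc n)) - y t) < e"
    proof (intro exI allI impI)
      fix n assume "n \<ge> N"
      let ?c = "real_of_int \<lceil>real (Suc n) * t\<rceil> / real (Suc n)"
      have "real (Suc n) * t \<le> real_of_int \<lceil>real (Suc n) * t\<rceil>" by linarith
      then have c1: "t \<le> ?c" by (simp add: field_simps)
      have "real_of_int \<lceil>real (Suc n) * t\<rceil> < real (Suc n) * t + 1" by linarith
      then have "?c < (real (Suc n) * t + 1) / real (Suc n)"
        by (intro divide_strict_right_mono) auto
      also have "\<dots> = t + 1 / real (Suc n)" by (simp only: add_divide_distrib) simp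
      finally have "?c < t + 1 / real (Suc n)" .
      moreover have "1 / real (Suc n) \<le> 1 / real (Suc N)" using \<open>n \<ge> N\<close> by (simp add: frac_le)
      ultimately have c2: "?c < b" using N by linarith
      show "norm (y ?c - y t) < e"
      proof (cases "?c = t")
        case True then show ?thesis using \<open>e>0\<close> by simp
      next
        case False then show ?thesis using b(2)[of ?c] c1 c2 by (simp add: dist_real_def)
      qed
    qed
  qed
qed

lemma ll_measurable:
  fixes y :: "real \<Rightarrow> real"
  assumes ym: "y \<in> borel_measurable borel"
    and ll: "\<And>t. (y \<longlongrightarrow> g t) (at_left t)"
  shows "g \<in> borel_measurable borel"
proof (rule borel_measurable_LIMSEQ_real)
  fix n :: nat
  show "(\<lambda>t. y (t - 1 / real (Suc n))) \<in> borel_measurable borel"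
    using ym by measurable
next
  fix t :: real
  have "filterlim (\<lambda>n. t - 1 / real (Suc n)) (at_left t) sequentially"
    unfolding filterlim_at
  proof
    have "(\<lambda>n. t - 1 / real (Suc n)) \<longlonglongrightarrow> t - 0"
      by (intro tendsto_intros LIMSEQ_Suc[OF lim_const_over_n])
    then show "(\<lambda>n. t - 1 / real (Suc n)) \<longlonglongrightarrow> t" by simp
    show "eventually (\<lambda>n. t - 1 / real (Suc n) \<in> {..<t} \<and> t - 1 / real (Suc n) \<noteq> t) sequentially" by auto
  qed
  then show "(\<lambda>n. y (t - 1 / real (Suc n))) \<longlonglongrightarrow> g t"
    using ll[of t] by (rule filterlim_compose[rotated])
qed

lemma cadlag_bounded:
  fixes y :: "real \<Rightarrow> real"
  assumes rc: "\<And>t. continuous (at_right t) y" and ll: "\<And>t. \<exists>l. (y \<longlongrightarrow> l) (at_left t)"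
  shows "\<exists>B. \<forall>u\<in>{a..b}. \<bar>y u\<bar> \<le> B"
proof -
  have loc: "\<exists>d B. d > 0 \<and> (\<forall>u. dist u t < d \<longrightarrow> \<bar>y u\<bar> \<le> B)" for t
  proof -
    have lim: "(y \<longlongrightarrow> y t) (at_right t)" using rc[of t] by (simp add: continuous_within)
    have "eventually (\<lambda>u. dist (y u) (y t) < 1) (at_right t)" using tendstoD[OF lim] by simp
    then obtain b1 where b1: "b1 > t" "\<And>u. u > t \<Longrightarrow> u < b1 \<Longrightarrow> dist (y u) (y t) < 1"
      by (auto simp: eventually_at_right_field)
    obtain l where l: "(y \<longlongrightarrow> l) (at_left t)" using ll by blast
    have "eventually (\<lambda>u. dist (y u) l < 1) (at_left t)" using tendstoD[OF l] by simp
    then obtain b2 where b2: "b2 < t" "\<And>u. u > b2 \<Longrightarrow> u < t \<Longrightarrow> dist (y u) l < 1"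
      by (auto simp: eventually_at_left_field)
    show ?thesis
    proof (intro exI conjI allI impI)
      show "min (b1 - t) (t - b2) > 0" using b1 b2 by auto
      fix u assume u: "dist u t < min (b1 - t) (t - b2)"
      consider "u = t" | "u > t" | "u < t" by linarith
      then show "\<bar>y u\<bar> \<le> \<bar>y t\<bar> + \<bar>l\<bar> + 1"
      proof cases
        case 2 then have "dist (y u) (y t) < 1" using u by (intro b1(2)) (auto simp: dist_real_def)
        then show ?thesis by (auto simp: dist_real_def)
      next
        case 3 then have "dist (y u) l < 1" using u by (intro b2(2)) (auto simp: dist_real_def)
        then show ?thesis by (auto simp: dist_real_def)
      qed auto
    qed
  qed
  then obtain d B where dB: "\<And>t. d t > 0" "\<And>t u. dist u t < d t \<Longrightarrow> \<bar>y u\<bar> \<le> B t"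
    by metis
  have "compact {a..b}" by simp
  then obtain T where T: "T \<subseteq> {a..b}" "finite T" "{a..b} \<subseteq> (\<Union>t\<in>T. ball t (d t))"
    by (rule compactE_image[of "{a..b}" "{a..b}" "\<lambda>t. ball t (d t)"]) (use dB in auto)
  show ?thesis
  proof (intro exI ballI)
    fix u assume "u \<in> {a..b}"
    then obtain t where t: "t \<in> T" "u \<in> ball t (d t)" using T by blast
    then have "\<bar>y u\<bar> \<le> B t" using dB(2)[of u t] by (simp add: dist_commute)
    also have "\<dots> \<le> \<bar>B t\<bar>" by simp
    also have "\<dots> \<le> (\<Sum>s\<in>T. \<bar>B s\<bar>)" using t(1) T(2) by (intro member_le_sum) auto
    finally show "\<bar>y u\<bar> \<le> (\<Sum>s\<in>T. \<bar>B s\<bar>)" .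
  qed
qed

lemma set_int_bnd_integrable:
  fixes f :: "'a \<Rightarrow> real"
  assumes "A \<in> sets M" "emeasure M A < \<infinity>" "f \<in> borel_measurable M" "\<forall>u\<in>A. \<bar>f u\<bar> \<le> C"
  shows "set_integrable M A f"
  unfolding set_integrable_def
  by (rule integrableI_bounded_set[where A=A and B=C]) (use assms in \<open>auto simp: indicator_def\<close>)

lemma set_int_bnd:
  fixes f :: "'a \<Rightarrow> real"
  assumes A: "A \<in> sets M" "emeasure M A < \<infinity>" "f \<in> borel_measurable M" "\<forall>u\<in>A. \<bar>f u\<bar> \<le> C"
  shows "\<bar>LINT u:A|M. f u\<bar> \<le> C * measure M A"
proof -
  have i: "set_integrable M A f" by (rule set_int_bnd_integrable[OF A])
  have ic: "set_integrable M A (\<lambda>_. c)" for c :: real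
    by (rule set_int_bnd_integrable[where C="\<bar>c\<bar>"]) (use A in auto)
  have fin: "emeasure M A \<noteq> \<infinity>" using A by auto
  have "(LINT u:A|M. f u) \<le> (LINT u:A|M. C)" by (rule set_integral_mono[OF i ic]) (use A in auto)
  moreover have "(LINT u:A|M. -C) \<le> (LINT u:A|M. f u)" by (rule set_integral_mono[OF ic i]) (use A in auto)
  ultimately show ?thesis using set_integral_const[OF A(1) fin, of C] set_integral_const[OF A(1) fin, of "-C"]
    by (simp add: abs_le_iff mult.commute)
qed

lemma im_sigma_finite: "sigma_finite_measure (interval_measure F)"
proof
  show "\<exists>A. countable A \<and> A \<subseteq> sets (interval_measure F) \<and> \<Union> A = space (interval_measure F) \<and> (\<forall>a\<in>A. emeasure (interval_measure F) a \<noteq> \<infinity>)"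
  proof (intro exI[of _ "range (\<lambda>n::nat. {-real n<..real n})"] conjI)
    show "\<Union> (range (\<lambda>n::nat. {-real n<..real n})) = space (interval_measure F)"
    proof (auto simp: space_interval_measure)
      fix t :: real
      obtain n :: nat where "\<bar>t\<bar> < real n" using reals_Archimedean2 by blast
      then show "\<exists>n. - real n < t \<and> t \<le> real n" by (intro exI[of _ n]) auto
    qed
  qed (use im_fin in \<open>auto simp: less_top\<close>)
qed

lemma bounded_supp:
  fixes f :: "real \<Rightarrow> real"
  assumes "continuous_on UNIV f" "\<forall>u. u \<notin> {a..b} \<longrightarrow> f u = 0"
  shows "\<exists>C. \<forall>u. \<bar>f u\<bar> \<le> C"
proof -
  have "compact (f ` {a..b})" by (rule compact_continuous_image) (use assms in \<open>auto intro: continuous_on_subset\<close>)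
  then obtain C where C: "\<forall>v\<in>f ` {a..b}. norm v \<le> C" using compact_imp_bounded bounded_iff by metis
  show ?thesis
  proof (intro exI allI)
    fix u show "\<bar>f u\<bar> \<le> max C 0" using C assms(2) by (cases "u \<in> {a..b}") force+
  qed
qed

locale dde =
  fixes p q r eta c_mu c_nu :: real and f_mu f_nu S x :: "real \<Rightarrow> real"
  assumes p: "p \<ge> 0" and q: "q \<ge> 0" and r: "r = max p q" and cnu: "c_nu > 0"
    and fmc: "continuous_on UNIV f_mu" and fmn: "\<forall>u. f_mu u \<ge> 0" and fms: "\<forall>u. u \<notin> {-p..0} \<longrightarrow> f_mu u = 0"
    and fnc: "continuous_on UNIV f_nu" and fnn: "\<forall>u. f_nu u \<ge> 0" and fns: "\<forall>u. u \<notin> {-q..0} \<longrightarrow> f_nu u = 0"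
    and eta: "eta > 0" and cmu: "c_mu > (LINT u|lborel. \<bar>f_mu u\<bar>)"
    and cad: "cadlag_from (-r) x"
    and sol: "solves_path eta c_mu c_nu f_mu f_nu p q S x"
    and init: "\<forall>u\<in>{-r..0}. x u \<ge> eta / (c_mu - (LINT u|lborel. \<bar>f_mu u\<bar>))"
begin

definition "y t = x (max t (-r))"
definition "g = left_lim y"

lemma y_eq: "t \<ge> -r \<Longrightarrow> y t = x t"
  by (simp add: y_def max_def)

lemma y_rc: "continuous (at_right t) y"
proof -
  show ?thesis
  proof (cases "t \<ge> -r")
    case True
    then have "(x \<longlongrightarrow> x t) (at_right t)" using cad by (simp add: cadlag_from_def continuous_within)
    moreover have "eventually (\<lambda>u. x u = y u) (at_right t)"
      using eventually_at_right_less[of t] by eventually_elim (use True in \<open>simp add: y_eq\<close>)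
    ultimately have "(y \<longlongrightarrow> x t) (at_right t)" by (rule tendsto_cong[THEN iffD1, rotated])
    then show ?thesis using True by (simp add: continuous_within y_eq)
  next
    case False
    have "eventually (\<lambda>u. u < -r) (at_right t)"
      using False by (auto simp: eventually_at_right_field intro!: exI[of _ "-r"])
    then have "eventually (\<lambda>u. x (-r) = y u) (at_right t)" by eventually_elim (simp add: y_def)
    then have "(y \<longlongrightarrow> x (-r)) (at_right t)" by (rule tendsto_cong[THEN iffD1]) simp
    then show ?thesis using False by (simp add: continuous_within y_def)
  qed
qed

lemma y_ll_ex: "\<exists>l. (y \<longlongrightarrow> l) (at_left t)"
proof (cases "t > -r")
  case True
  then obtain l where l: "(x \<longlongrightarrow> l) (at_left t)" using cad True unfolding cadlag_from_def by (meson less_imp_le)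
  have "eventually (\<lambda>u. u > -r) (at_left t)"
    using True by (auto simp: eventually_at_left_field intro!: exI[of _ "-r"])
  then have "eventually (\<lambda>u. x u = y u) (at_left t)" by eventually_elim (simp add: y_eq)
  then show ?thesis using l by (intro exI[of _ l]) (rule tendsto_cong[THEN iffD1, rotated])
next
  case False
  have "eventually (\<lambda>u. u < -r) (at_left t)"
    using False by (auto simp: eventually_at_left_field intro!: exI[of _ "t - 1"])
  then have "eventually (\<lambda>u. x (-r) = y u) (at_left t)" by eventually_elim (simp add: y_def)
  then have "(y \<longlongrightarrow> x (-r)) (at_left t)" by (rule tendsto_cong[THEN iffD1]) simp
  then show ?thesis by blast
qed

lemma y_ll: "(y \<longlongrightarrow> g t) (at_left t)"
proof -
  obtain l where l: "(y \<longlongrightarrow> l) (at_left t)" using y_ll_ex by blast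
  then have "Lim (at_left t) y = l" by (intro tendsto_Lim) auto
  then show ?thesis using l by (simp add: g_def left_lim_def)
qed

lemma g_eq: "v > -r \<Longrightarrow> left_lim x v = g v"
proof -
  assume v: "v > -r"
  have "eventually (\<lambda>u. u > -r) (at_left v)"
    using v by (auto simp: eventually_at_left_field intro!: exI[of _ "-r"])
  then have ev: "eventually (\<lambda>u. y u = x u) (at_left v)" by eventually_elim (simp add: y_eq)
  have "(x \<longlongrightarrow> g v) (at_left v)" using y_ll[of v] ev by (rule tendsto_cong[THEN iffD1, rotated])
  then have "Lim (at_left v) x = g v" by (intro tendsto_Lim) auto
  then show ?thesis by (simp add: left_lim_def)
qed

lemma y_meas[measurable]: "y \<in> borel_measurable borel"
  by (rule rc_measurable) (rule y_rc)

lemma g_meas[measurable]: "g \<in> borel_measurable borel"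
  by (rule ll_measurable[OF y_meas y_ll])

lemma y_bnd: "\<exists>B. \<forall>u\<in>{a..b}. \<bar>y u\<bar> \<le> B"
  by (rule cadlag_bounded[OF y_rc y_ll_ex])

lemma g_bnd: "\<exists>B. \<forall>u\<in>{a<..b}. \<bar>g u\<bar> \<le> B"
proof -
  obtain B where B: "\<forall>u\<in>{a..b}. \<bar>y u\<bar> \<le> B" using y_bnd by blast
  have "\<bar>g u\<bar> \<le> B" if u: "u \<in> {a<..b}" for u
  proof -
    have "((\<lambda>v. \<bar>y v\<bar>) \<longlongrightarrow> \<bar>g u\<bar>) (at_left u)" by (intro tendsto_intros y_ll)
    moreover have "eventually (\<lambda>v. \<bar>y v\<bar> \<le> B) (at_left u)"
    proof -
      have "eventually (\<lambda>v. v > a \<and> v < u) (at_left u)"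
        using u by (auto simp: eventually_at_left_field)
      then show ?thesis by eventually_elim (use B u in auto)
    qed
    ultimately show ?thesis by (rule tendsto_upperbound) auto
  qed
  then show ?thesis by blast
qed


abbreviation "mu \<equiv> interval_measure S"
definition "K = (LINT u|lborel. \<bar>f_mu u\<bar>)"
definition "m = eta / (c_mu - K)"
definition "Af s = (LINT u:{-p..0}|lborel. f_mu u * y (s + u))"
definition "Bf s = (LINT v:{s-q<..s}|mu. f_nu (v - s) * g v)"
definition "Df s = eta - c_mu * y s + Af s + Bf s"

lemma fm_meas[measurable]: "f_mu \<in> borel_measurable borel"
  by (rule borel_measurable_continuous_onI[OF fmc])
lemma fn_meas[measurable]: "f_nu \<in> borel_measurable borel"
  by (rule borel_measurable_continuous_onI[OF fnc])

lemma r_ge: "-r \<le> -p" "-r \<le> -q" "-r \<le> 0" using r p q by auto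

lemma eqn: "t \<ge> 0 \<Longrightarrow> y t = y 0 + (LINT s:{0..t}|lborel. Df s) + c_nu * (LINT v:{0<..t}|mu. g v)"
proof -
  assume t: "t \<ge> 0"
  have e: "x t = x 0 + (LINT s:{0..t}|lborel. eta - c_mu * x s + xi_term f_mu f_nu p q S x s)
                 + c_nu * stieltjes_int S 0 t (\<lambda>v. left_lim x v)"
    using sol t unfolding solves_path_def by blast
  have "(LINT s:{0..t}|lborel. eta - c_mu * x s + xi_term f_mu f_nu p q S x s) = (LINT s:{0..t}|lborel. Df s)"
  proof (rule set_lebesgue_integral_cong, simp, intro allI impI)
    fix s assume s: "s \<in> {0..t}"
    have 1: "x s = y s" using s r_ge by (simp add: y_eq)
    have 2: "(LINT u:{-p..0}|lborel. f_mu u * x (s + u)) = Af s"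
      unfolding Af_def by (rule set_lebesgue_integral_cong) (use s r_ge in \<open>auto simp: y_eq\<close>)
    have 3: "stieltjes_int S (s - q) s (\<lambda>v. f_nu (v - s) * left_lim x v) = Bf s"
      unfolding Bf_def stieltjes_int_def by (rule set_lebesgue_integral_cong) (use s r_ge in \<open>auto simp: g_eq\<close>)
    show "eta - c_mu * x s + xi_term f_mu f_nu p q S x s = Df s"
      by (simp add: xi_term_def 1 2 3 Df_def)
  qed
  moreover have "stieltjes_int S 0 t (\<lambda>v. left_lim x v) = (LINT v:{0<..t}|mu. g v)"
    unfolding stieltjes_int_def by (rule set_lebesgue_integral_cong) (use r_ge in \<open>auto simp: g_eq\<close>)
  moreover have "y t = x t" "y 0 = x 0" using t r_ge by (simp_all add: y_eq)
  ultimately show ?thesis using e by metis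
qed

lemma Af_meas[measurable]: "Af \<in> borel_measurable borel"
proof -
  have "(\<lambda>s. \<integral>u. indicator {-p..0} u *\<^sub>R (f_mu u * y (s + u)) \<partial>lborel) \<in> borel_measurable borel"
    by (rule lborel.borel_measurable_lebesgue_integral) measurable
  then show ?thesis by (simp add: Af_def[abs_def] set_lebesgue_integral_def)
qed

lemma Bf_meas[measurable]: "Bf \<in> borel_measurable borel"
proof -
  have "(\<lambda>s. \<integral>v. (if s - q < v \<and> v \<le> s then f_nu (v - s) * g v else 0) \<partial>mu) \<in> borel_measurable borel"
  proof (rule sigma_finite_measure.borel_measurable_lebesgue_integral[OF im_sigma_finite])
    have "(\<lambda>(s, v). if s - q < v \<and> v \<le> s then f_nu (v - s) * g v else 0) \<in> borel_measurable (borel \<Otimes>\<^sub>M (borel :: real measure))"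
      by measurable
    moreover have "sets (borel \<Otimes>\<^sub>M mu) = sets (borel \<Otimes>\<^sub>M (borel :: real measure))"
      by (intro sets_pair_measure_cong) auto
    then have "borel_measurable (borel \<Otimes>\<^sub>M mu) = borel_measurable (borel \<Otimes>\<^sub>M (borel :: real measure))"
      by (rule measurable_cong_sets) (rule refl)
    ultimately show "(\<lambda>(s, v). if s - q < v \<and> v \<le> s then f_nu (v - s) * g v else 0) \<in> borel_measurable (borel \<Otimes>\<^sub>M mu)"
      by simp
  qed
  moreover have "(\<lambda>s. \<integral>v. (if s - q < v \<and> v \<le> s then f_nu (v - s) * g v else 0) \<partial>mu) = Bf"
  proof
    fix s
    show "(\<integral>v. (if s - q < v \<and> v \<le> s then f_nu (v - s) * g v else 0) \<partial>mu) = Bf s"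
      unfolding Bf_def set_lebesgue_integral_def
      by (rule Bochner_Integration.integral_cong) (auto simp: indicator_def)
  qed
  ultimately show ?thesis by simp
qed

lemma Df_meas[measurable]: "Df \<in> borel_measurable borel"
  unfolding Df_def[abs_def] by measurable


lemma lb_fin: "emeasure lborel {a..b::real} < \<infinity>"
  by (simp add: emeasure_lborel_Icc_eq)

lemma mu_fm: "{a<..b} \<in> fmeasurable mu"
  using im_fin by (auto simp: fmeasurable_def)

lemma Df_bnd: "\<exists>C. \<forall>s\<in>{0..t}. \<bar>Df s\<bar> \<le> C"
proof -
  obtain By where By: "\<forall>u\<in>{-r..t}. \<bar>y u\<bar> \<le> By" using y_bnd by blast
  obtain Bg0 where Bg0: "\<forall>u\<in>{-r<..t}. \<bar>g u\<bar> \<le> Bg0" using g_bnd by blast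
  define Bg where "Bg = max Bg0 0"
  have Bg: "\<forall>u\<in>{-r<..t}. \<bar>g u\<bar> \<le> Bg" and Bg00: "0 \<le> Bg" using Bg0 by (auto simp: Bg_def)
  obtain Fm where Fm: "\<forall>u. \<bar>f_mu u\<bar> \<le> Fm" using bounded_supp[OF fmc fms] by blast
  obtain Fn where Fn: "\<forall>u. \<bar>f_nu u\<bar> \<le> Fn" using bounded_supp[OF fnc fns] by blast
  have Fm0: "0 \<le> Fm" using Fm by (metis abs_ge_zero order_trans)
  have Fn0: "0 \<le> Fn" using Fn by (metis abs_ge_zero order_trans)
  have "\<bar>Df s\<bar> \<le> \<bar>eta\<bar> + \<bar>c_mu\<bar> * By + (Fm * By) * p + (Fn * Bg) * measure mu {-r<..t}"
    if s: "s \<in> {0..t}" for s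
  proof -
    have y1: "\<bar>y s\<bar> \<le> By" using By s r_ge by auto
    have "\<bar>Af s\<bar> \<le> (Fm * By) * measure lborel {-p..0}"
      unfolding Af_def
    proof (rule set_int_bnd)
      show "\<forall>u\<in>{-p..0}. \<bar>f_mu u * y (s + u)\<bar> \<le> Fm * By"
      proof
        fix u assume u: "u \<in> {-p..0}"
        have "\<bar>y (s + u)\<bar> \<le> By" using By s u r_ge by auto
        then show "\<bar>f_mu u * y (s + u)\<bar> \<le> Fm * By"
          unfolding abs_mult using Fm Fm0 by (intro mult_mono) auto
      qed
    qed (use lb_fin[of "-p" 0] in auto)
    also have "\<dots> = Fm * By * p" using p by simp
    finally have a: "\<bar>Af s\<bar> \<le> Fm * By * p" .
    have "\<bar>Bf s\<bar> \<le> (Fn * Bg) * measure mu {s-q<..s}"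
      unfolding Bf_def
    proof (rule set_int_bnd)
      show "\<forall>v\<in>{s-q<..s}. \<bar>f_nu (v - s) * g v\<bar> \<le> Fn * Bg"
      proof
        fix v assume v: "v \<in> {s-q<..s}"
        have "\<bar>g v\<bar> \<le> Bg" using Bg s v r_ge by auto
        then show "\<bar>f_nu (v - s) * g v\<bar> \<le> Fn * Bg"
          unfolding abs_mult using Fn Fn0 by (intro mult_mono) auto
      qed
    qed (use im_fin[of S "s-q" s] in auto)
    also have "\<dots> \<le> (Fn * Bg) * measure mu {-r<..t}"
    proof (rule mult_left_mono)
      show "measure mu {s-q<..s} \<le> measure mu {-r<..t}"
        by (rule measure_mono_fmeasurable[OF _ _ mu_fm]) (use s r_ge in auto)
      show "0 \<le> Fn * Bg" using Fn0 Bg00 by simp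
    qed
    finally have b: "\<bar>Bf s\<bar> \<le> (Fn * Bg) * measure mu {-r<..t}" .
    have "\<bar>c_mu * y s\<bar> \<le> \<bar>c_mu\<bar> * By" unfolding abs_mult using y1 by (intro mult_left_mono) auto
    then show ?thesis using a b unfolding Df_def by linarith
  qed
  then show ?thesis by blast
qed

lemma Df_int: "set_integrable lborel {0..t} Df"
proof -
  obtain C where "\<forall>s\<in>{0..t}. \<bar>Df s\<bar> \<le> C" using Df_bnd by blast
  then show ?thesis using lb_fin[of 0 t] by (intro set_int_bnd_integrable) auto
qed

lemma g_int: "set_integrable mu {a<..b} g"
proof -
  obtain C where "\<forall>s\<in>{a<..b}. \<bar>g s\<bar> \<le> C" using g_bnd by blast
  then show ?thesis by (intro set_int_bnd_integrable) (use im_fin[of S a b] in auto)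
qed

lemma incr:
  assumes "0 \<le> s" "s \<le> t"
  shows "y t - y s = (LINT u:{s<..t}|lborel. Df u) + c_nu * (LINT v:{s<..t}|mu. g v)"
proof -
  have "{0..t} = {0..s} \<union> {s<..t}" using assms by auto
  moreover have "(LINT u:{0..s} \<union> {s<..t}|lborel. Df u) = (LINT u:{0..s}|lborel. Df u) + (LINT u:{s<..t}|lborel. Df u)"
    by (rule set_integral_Un) (use assms set_integrable_subset[OF Df_int[of t], of "{s<..t}"] Df_int[of s] in \<open>auto simp: subset_eq\<close>)
  ultimately have 1: "(LINT u:{0..t}|lborel. Df u) = (LINT u:{0..s}|lborel. Df u) + (LINT u:{s<..t}|lborel. Df u)"
    by simp
  have "{0<..t} = {0<..s} \<union> {s<..t}" using assms by auto
  then have 2: "(LINT u:{0<..t}|mu. g u) = (LINT u:{0<..s}|mu. g u) + (LINT u:{s<..t}|mu. g u)"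
    using assms by (simp add: set_integral_Un g_int)
  then have 3: "c_nu * (LINT u:{0<..t}|mu. g u) = c_nu * (LINT u:{0<..s}|mu. g u) + c_nu * (LINT u:{s<..t}|mu. g u)"
    by (simp add: distrib_left)
  have "0 \<le> t" using assms by linarith
  show ?thesis using eqn[OF \<open>0 \<le> t\<close>] eqn[OF \<open>0 \<le> s\<close>] 1 3 by linarith
qed


lemma set_nonneg: "(\<And>v. v \<in> A \<Longrightarrow> 0 \<le> f v) \<Longrightarrow> 0 \<le> (LINT v:A|M. (f v :: real))"
  unfolding set_lebesgue_integral_def by (rule integral_nonneg_AE) (auto simp: indicator_def)

lemma fm_int: "set_integrable lborel {-p..0} f_mu"
proof -
  obtain Fm where Fm: "\<forall>u. \<bar>f_mu u\<bar> \<le> Fm" using bounded_supp[OF fmc fms] by blast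
  then show ?thesis using lb_fin[of "-p" 0] by (intro set_int_bnd_integrable[where C=Fm]) auto
qed

lemma K_eq: "K = (LINT u:{-p..0}|lborel. f_mu u)"
  unfolding K_def set_lebesgue_integral_def
  by (rule Bochner_Integration.integral_cong) (use fmn fms in \<open>auto simp: indicator_def\<close>)

lemma K_nonneg: "0 \<le> K"
  unfolding K_eq using fmn by (intro set_nonneg) auto

lemma K_lt: "K < c_mu" using cmu by (simp add: K_def)

lemma m_pos: "0 < m" using K_lt eta by (simp add: m_def)

lemma eta_eq: "eta = (c_mu - K) * m" using K_lt by (simp add: m_def)

lemma Af_lb:
  assumes "\<forall>u\<in>{s-p..s}. c \<le> y u"
  shows "K * c \<le> Af s"
proof -
  obtain By where By: "\<forall>u\<in>{s-p..s}. \<bar>y u\<bar> \<le> By" using y_bnd by blast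
  obtain Fm where Fm: "\<forall>u. \<bar>f_mu u\<bar> \<le> Fm" using bounded_supp[OF fmc fms] by blast
  have Fm0: "0 \<le> Fm" using Fm by (metis abs_ge_zero order_trans)
  have i1: "set_integrable lborel {-p..0} (\<lambda>u. f_mu u * c)"
    using fm_int by (rule set_integrable_mult_left)
  have i2: "set_integrable lborel {-p..0} (\<lambda>u. f_mu u * y (s + u))"
  proof (rule set_int_bnd_integrable[where C="Fm * By"])
    show "\<forall>u\<in>{-p..0}. \<bar>f_mu u * y (s + u)\<bar> \<le> Fm * By"
    proof
      fix u assume u: "u \<in> {-p..0}"
      have "\<bar>y (s + u)\<bar> \<le> By" using By u by auto
      then show "\<bar>f_mu u * y (s + u)\<bar> \<le> Fm * By"
        unfolding abs_mult using Fm Fm0 by (intro mult_mono) auto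
    qed
  qed (use lb_fin[of "-p" 0] in auto)
  have "K * c = (LINT u:{-p..0}|lborel. f_mu u * c)" by (simp add: K_eq)
  also have "\<dots> \<le> (LINT u:{-p..0}|lborel. f_mu u * y (s + u))"
  proof (rule set_integral_mono[OF i1 i2])
    fix u assume u: "u \<in> {-p..0}"
    then have "c \<le> y (s + u)" using assms by auto
    then show "f_mu u * c \<le> f_mu u * y (s + u)" using fmn by (intro mult_left_mono) auto
  qed
  finally show ?thesis by (simp add: Af_def)
qed

lemma Bf_nonneg:
  assumes "\<forall>v\<in>{s-q<..s}. 0 \<le> g v"
  shows "0 \<le> Bf s"
  unfolding Bf_def using assms fnn by (intro set_nonneg) auto

lemma g_lb:
  assumes "a < v" "\<forall>u\<in>{a..<v}. c \<le> y u"
  shows "c \<le> g v"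
proof (rule tendsto_lowerbound[OF y_ll])
  have "eventually (\<lambda>u. a < u \<and> u < v) (at_left v)"
    using assms(1) by (auto simp: eventually_at_left_field)
  then show "eventually (\<lambda>u. c \<le> y u) (at_left v)" by eventually_elim (use assms in auto)
qed auto


lemma lb_fin2: "emeasure lborel {a<..b::real} < \<infinity>"
  by (cases "a \<le> b") auto

lemma int_Df_bnd:
  assumes "\<forall>u\<in>{0..t}. \<bar>Df u\<bar> \<le> C" "0 \<le> s" "s \<le> t"
  shows "\<bar>LINT u:{s<..t}|lborel. Df u\<bar> \<le> C * (t - s)"
proof -
  have "\<bar>LINT u:{s<..t}|lborel. Df u\<bar> \<le> C * measure lborel {s<..t}"
    by (rule set_int_bnd) (use assms lb_fin2[of s t] in auto)
  then show ?thesis using assms by simp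
qed

lemma step_a:
  assumes tau: "0 \<le> tau" and below: "\<forall>u\<in>{-r..<tau}. m \<le> y u"
  shows "m \<le> y tau"
proof (cases "tau = 0")
  case True
  have "m \<le> x 0" using init r_ge by (auto simp: m_def K_def)
  then show ?thesis using True r_ge by (simp add: y_eq)
next
  case False
  then have tau0: "0 < tau" using tau by simp
  obtain C where C: "\<forall>s\<in>{0..tau}. \<bar>Df s\<bar> \<le> C" using Df_bnd by blast
  have key: "m - C * (tau - s) \<le> y tau" if s: "0 \<le> s" "s < tau" for s
  proof -
    have e: "y tau - y s = (LINT u:{s<..tau}|lborel. Df u) + c_nu * (LINT v:{s<..tau}|mu. g v)"
      using s by (intro incr) auto
    have b: "\<bar>LINT u:{s<..tau}|lborel. Df u\<bar> \<le> C * (tau - s)"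
      using C s by (intro int_Df_bnd) auto
    have "0 \<le> (LINT v:{s<..tau}|mu. g v)"
    proof (rule set_nonneg)
      fix v assume v: "v \<in> {s<..tau}"
      have "m \<le> g v" by (rule g_lb[where a="-r"]) (use v s r_ge below in auto)
      then show "0 \<le> g v" using m_pos by simp
    qed
    then have j: "0 \<le> c_nu * (LINT v:{s<..tau}|mu. g v)" using cnu by simp
    have "m \<le> y s" using below s r_ge by auto
    then show ?thesis using e b j by linarith
  qed
  have lim: "((\<lambda>s. m - C * (tau - s)) \<longlongrightarrow> m - C * (tau - tau)) (at_left tau)"
    by (intro tendsto_intros)
  show ?thesis
  proof (rule tendsto_upperbound[OF lim[simplified]])
    have "eventually (\<lambda>s. 0 < s \<and> s < tau) (at_left tau)"
      using tau0 by (auto simp: eventually_at_left_field)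
    then show "eventually (\<lambda>s. m - C * (tau - s) \<le> y tau) (at_left tau)"
      by eventually_elim (use key in auto)
  qed auto
qed


lemma step_b:
  assumes tau: "0 \<le> tau" and below: "\<forall>u\<in>{-r..tau}. m \<le> y u"
  shows "\<exists>d>0. \<forall>u\<in>{tau..tau+d}. m \<le> y u"
proof -
  have lim: "(y \<longlongrightarrow> y tau) (at_right tau)" using y_rc[of tau] by (simp add: continuous_within)
  have "eventually (\<lambda>u. dist (y u) (y tau) < m/2) (at_right tau)"
    using tendstoD[OF lim, of "m/2"] m_pos by simp
  then obtain b where b: "b > tau" "\<And>u. tau < u \<Longrightarrow> u < b \<Longrightarrow> dist (y u) (y tau) < m/2"
    by (auto simp: eventually_at_right_field)
  have ytau: "m \<le> y tau" using below tau r_ge by auto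
  have half: "m/2 \<le> y u" if u: "-r \<le> u" "u < b" for u
  proof (cases "u \<le> tau")
    case True then have "m \<le> y u" using below u by auto
    then show ?thesis using m_pos by linarith
  next
    case False
    then have "dist (y u) (y tau) < m/2" using u by (intro b(2)) auto
    then have "\<bar>y u - y tau\<bar> < m/2" by (simp add: dist_real_def)
    then show ?thesis using ytau by linarith
  qed
  define T1 where "T1 = (tau + b) / 2"
  have T1: "tau < T1" "T1 < b" using b(1) by (auto simp: T1_def)
  obtain C0 where C0: "\<forall>s\<in>{0..T1}. \<bar>Df s\<bar> \<le> C0" using Df_bnd by blast
  have C00: "0 \<le> C0" using C0 T1 tau by (metis abs_ge_zero atLeastAtMost_iff order_trans less_imp_le order_refl)
  define d where "d = min (T1 - tau) (1 / (2 * (K + 1)))"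
  have d0: "0 < d" using T1 K_nonneg by (auto simp: d_def)
  have dT1: "tau + d \<le> T1" by (auto simp: d_def)
  have Kd: "K * d \<le> 1/2"
  proof -
    have "K * d \<le> K * (1 / (2 * (K + 1)))" using K_nonneg by (intro mult_left_mono) (auto simp: d_def)
    also have "\<dots> = K / (2 * (K + 1))" by simp
    also have "\<dots> \<le> 1/2" using K_nonneg by (simp add: divide_simps)
    finally show ?thesis .
  qed
  have gpos: "0 \<le> g v" if v: "-r < v" "v \<le> T1" for v
  proof -
    have "m/2 \<le> g v" by (rule g_lb[where a="-r"]) (use v T1 half in auto)
    then show ?thesis using m_pos by simp
  qed
  have Dlb: "c_mu * (m - y u) - K * E \<le> Df u"
    if E: "0 \<le> E" "\<forall>w\<in>{tau..tau+d}. m - E \<le> y w" and u: "u \<in> {tau..tau+d}" for E u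
  proof -
    have a: "K * (m - E) \<le> Af u"
    proof (rule Af_lb, rule ballI)
      fix w assume w: "w \<in> {u-p..u}"
      show "m - E \<le> y w"
      proof (cases "w \<le> tau")
        case True then have "m \<le> y w" using below w u tau r_ge by auto
        then show ?thesis using E by linarith
      next
        case False then show ?thesis using E w u by auto
      qed
    qed
    have bb: "0 \<le> Bf u" by (rule Bf_nonneg) (use u tau r_ge dT1 in \<open>auto intro!: gpos\<close>)
    have "K * (m - E) = K * m - K * E" by (simp add: right_diff_distrib)
    moreover have "eta = c_mu * m - K * m" using eta_eq by (simp add: left_diff_distrib)
    moreover have "c_mu * (m - y u) = c_mu * m - c_mu * y u" by (simp add: right_diff_distrib)
    ultimately show ?thesis using a bb by (simp add: Df_def)
  qed
  have iter: "m - E/2 \<le> y t"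
    if E: "0 \<le> E" "\<forall>w\<in>{tau..tau+d}. m - E \<le> y w" and t: "t \<in> {tau..tau+d}" for E t
  proof (rule ccontr)
    assume "\<not> m - E/2 \<le> y t"
    then have yt: "y t < m - E/2" by simp
    define St where "St = {s \<in> {tau..t}. m \<le> y s}"
    define sg where "sg = Sup St"
    have tauS: "tau \<in> St" using ytau t by (auto simp: St_def)
    have bdd: "bdd_above St" by (auto simp: St_def bdd_above_def)
    have sg1: "tau \<le> sg" unfolding sg_def by (rule cSup_upper[OF tauS bdd])
    have sg2: "sg \<le> t" unfolding sg_def using tauS by (intro cSup_least) (auto simp: St_def)
    have after: "y u < m" if u: "sg < u" "u \<le> t" for u
    proof (rule ccontr)
      assume "\<not> y u < m"
      then have "u \<in> St" using u sg1 by (auto simp: St_def)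
      then have "u \<le> sg" unfolding sg_def by (rule cSup_upper[OF _ bdd])
      then show False using u by simp
    qed
    have KEd: "K * E * d \<le> E / 2"
    proof -
      have "K * E * d = E * (K * d)" by simp
      also have "\<dots> \<le> E * (1/2)" using Kd E by (intro mult_left_mono) auto
      finally show ?thesis by simp
    qed
    have tT1: "t \<le> T1" using t dT1 by auto
    have est: "m - C0 * (sg - s) - K * E * d \<le> y t" if s: "s \<in> St" for s
    proof -
      have s1: "tau \<le> s" "s \<le> t" "m \<le> y s" using s by (auto simp: St_def)
      have s2: "s \<le> sg" unfolding sg_def by (rule cSup_upper[OF s bdd])
      have e: "y t - y s = (LINT u:{s<..t}|lborel. Df u) + c_nu * (LINT v:{s<..t}|mu. g v)"
        using s1 tau by (intro incr) auto
      have "0 \<le> (LINT v:{s<..t}|mu. g v)"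
        by (rule set_nonneg) (use s1 tau r_ge tT1 in \<open>auto intro!: gpos\<close>)
      then have j: "0 \<le> c_nu * (LINT v:{s<..t}|mu. g v)" using cnu by simp
      have it: "set_integrable lborel A Df" if "A \<subseteq> {0..t}" "A \<in> sets lborel" for A
        by (rule set_integrable_subset[OF Df_int[of t]]) (use that in auto)
      have "{s<..t} = {s<..sg} \<union> {sg<..t}" using s2 sg2 by auto
      moreover have "(LINT u:{s<..sg} \<union> {sg<..t}|lborel. Df u) = (LINT u:{s<..sg}|lborel. Df u) + (LINT u:{sg<..t}|lborel. Df u)"
        by (rule set_integral_Un) (use s1 s2 sg1 sg2 tau in \<open>auto intro!: it\<close>)
      ultimately have sp: "(LINT u:{s<..t}|lborel. Df u) = (LINT u:{s<..sg}|lborel. Df u) + (LINT u:{sg<..t}|lborel. Df u)"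
        by simp
      have i1: "\<bar>LINT u:{s<..sg}|lborel. Df u\<bar> \<le> C0 * (sg - s)"
        by (rule int_Df_bnd) (use C0 s1 s2 sg2 tT1 tau in auto)
      have ic: "set_integrable lborel {sg<..t} (\<lambda>_. - (K * E))"
        by (rule set_int_bnd_integrable[where C="\<bar>K * E\<bar>"]) (use lb_fin2[of sg t] in auto)
      have "(LINT u:{sg<..t}|lborel. - (K * E)) \<le> (LINT u:{sg<..t}|lborel. Df u)"
      proof (rule set_integral_mono[OF ic])
        show "set_integrable lborel {sg<..t} Df" by (rule it) (use sg1 tau in auto)
        fix u assume u: "u \<in> {sg<..t}"
        have "y u < m" using u after by auto
        moreover have "0 < c_mu" using K_lt K_nonneg by linarith
        ultimately have "0 \<le> c_mu * (m - y u)" by simp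
        moreover have "c_mu * (m - y u) - K * E \<le> Df u" by (rule Dlb[OF E]) (use u sg1 t in auto)
        ultimately show "- (K * E) \<le> Df u" by linarith
      qed
      moreover have "(LINT u:{sg<..t}|lborel. - (K * E)) = - (K * E) * (t - sg)"
        using set_integral_const[of "{sg<..t}" lborel "- (K * E)"] sg2 by simp
      moreover have "K * E * (t - sg) \<le> K * E * d"
        using K_nonneg E t sg1 by (intro mult_left_mono) auto
      ultimately have i2: "- (K * E * d) \<le> (LINT u:{sg<..t}|lborel. Df u)" by simp
      show ?thesis using e j sp i1 i2 s1 by linarith
    qed
    define gap where "gap = m - E/2 - y t"
    have gap0: "0 < gap" using yt by (simp add: gap_def)
    define eps where "eps = gap / (C0 + 1)"
    have eps0: "0 < eps" using gap0 C00 by (simp add: eps_def)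
    have "sg - eps < Sup St" using eps0 by (simp add: sg_def)
    then obtain s where s: "s \<in> St" "sg - eps < s" using tauS by (auto elim: less_cSupE)
    have "C0 * (sg - s) \<le> C0 * eps" using s C00 by (intro mult_left_mono) auto
    also have "\<dots> < gap"
    proof -
      have "C0 * eps = gap * (C0 / (C0 + 1))" by (simp add: eps_def)
      also have "\<dots> < gap * 1" using gap0 C00 by (intro mult_strict_left_mono) auto
      finally show ?thesis by simp
    qed
    finally have "C0 * (sg - s) < gap" .
    then show False using est[OF s(1)] KEd by (simp add: gap_def)
  qed
  have ind: "\<forall>w\<in>{tau..tau+d}. m - (m/2) * (1/2)^n \<le> y w" for n
  proof (induction n)
    case 0
    show ?case using half tau r_ge dT1 T1 by auto
  next
    case (Suc n)
    have "m - (m/2) * (1/2)^n / 2 \<le> y t" if "t \<in> {tau..tau+d}" for t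
      by (rule iter[OF _ Suc that]) (use m_pos in simp)
    then show ?case by simp
  qed
  have fin: "m \<le> y w" if w: "w \<in> {tau..tau+d}" for w
  proof -
    have "(\<lambda>n. m - (m/2) * (1/2)^n) \<longlonglongrightarrow> m - (m/2) * 0"
      by (intro tendsto_intros LIMSEQ_realpow_zero) auto
    then have "(\<lambda>n. m - (m/2) * (1/2)^n) \<longlonglongrightarrow> m" by simp
    then show ?thesis
      by (rule tendsto_upperbound) (use ind w in auto)
  qed
  show ?thesis using d0 fin by blast
qed


lemma result:
  assumes t: "0 \<le> t"
  shows "eta / (c_mu - (LINT u|lborel. \<bar>f_mu u\<bar>)) \<le> x t"
proof -
  have "m \<le> y t"
  proof (rule ccontr)
    assume "\<not> m \<le> y t"
    define Bad where "Bad = {s \<in> {0..t}. y s < m}"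
    have tB: "t \<in> Bad" using t \<open>\<not> m \<le> y t\<close> by (auto simp: Bad_def)
    have bdd: "bdd_below Bad" by (auto simp: Bad_def bdd_below_def)
    define tau where "tau = Inf Bad"
    have tau0: "0 \<le> tau" unfolding tau_def using tB by (intro cInf_greatest) (auto simp: Bad_def)
    have lower: "tau \<le> s" if "s \<in> Bad" for s unfolding tau_def by (rule cInf_lower[OF that bdd])
    have below: "\<forall>u\<in>{-r..<tau}. m \<le> y u"
    proof
      fix u assume u: "u \<in> {-r..<tau}"
      show "m \<le> y u"
      proof (cases "u < 0")
        case True
        then have "m \<le> x u" using init u by (auto simp: m_def K_def)
        then show ?thesis using u by (simp add: y_eq)
      next
        case False
        show ?thesis
        proof (rule ccontr)
          assume "\<not> m \<le> y u"
          then have "u \<in> Bad" using False u lower[OF tB] by (auto simp: Bad_def)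
          then show False using lower u by force
        qed
      qed
    qed
    have "m \<le> y tau" by (rule step_a[OF tau0 below])
    then have below2: "\<forall>u\<in>{-r..tau}. m \<le> y u" using below by auto
    obtain d where d: "d > 0" "\<forall>u\<in>{tau..tau+d}. m \<le> y u" using step_b[OF tau0 below2] by blast
    have "tau + d \<le> Inf Bad"
    proof (rule cInf_greatest)
      show "Bad \<noteq> {}" using tB by blast
      fix s assume s: "s \<in> Bad"
      have "tau \<le> s" by (rule lower[OF s])
      moreover have "y s < m" using s by (auto simp: Bad_def)
      ultimately show "tau + d \<le> s" using d(2) by force
    qed
    then show False using d(1) by (simp add: tau_def)
  qed
  then show ?thesis using t r_ge by (simp add: y_eq m_def K_def)
qed

end

theorem theorem4p14:
  fixes M :: "'a measure" and F :: "real \<Rightarrow> 'a measure"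
    and L X :: "'a \<Rightarrow> real \<Rightarrow> real"
    and p q r eta c_mu c_nu :: real and f_mu f_nu :: "real \<Rightarrow> real"
  assumes "prob_space M"
    and "p \<ge> 0" and "q \<ge> 0" and r_def: "r = max p q"
    and "usual_filtration M F (-r)"
    and "levy_process M F (-r) L" and "centered_proc M (-r) L"
    and "integrable M (\<lambda>\<omega>. (L \<omega> 1) ^ 4)"
    and "c_nu > 0"
    and "continuous_on UNIV f_mu" and "\<forall>u. f_mu u \<ge> 0" and "\<forall>u. u \<notin> {-p..0} \<longrightarrow> f_mu u = 0"
    and "continuous_on UNIV f_nu" and "\<forall>u. f_nu u \<ge> 0" and "\<forall>u. u \<notin> {-q..0} \<longrightarrow> f_nu u = 0"
    \<comment> \<open>initial condition: adapted to the natural filtration of L, square-integrable supremum\<close>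
    and "\<forall>u\<in>{-r..0}. (\<lambda>\<omega>. X \<omega> u) \<in> borel_measurable (nat_filtration M L (-r) u)"
    \<comment> \<open>X is the solution: adapted, cadlag, E sup_{[-r,t]} X^2 < infinity, solves the equation a.s.\<close>
    and "adapted_proc F (-r) X"
    and "\<forall>\<omega>\<in>space M. cadlag_from (-r) (X \<omega>)"
    and "\<forall>t\<ge>0. (\<integral>\<^sup>+\<omega>. ennreal ((SUP u\<in>{-r..t}. \<bar>X \<omega> u\<bar>)\<^sup>2) \<partial>M) < \<infinity>"
    and "AE \<omega> in M. solves_path eta c_mu c_nu f_mu f_nu p q (sq_jump_sum (-r) (L \<omega>)) (X \<omega>)"
    \<comment> \<open>positivity hypotheses\<close>
    and "eta > 0"
    and "c_mu > (LINT u|lborel. \<bar>f_mu u\<bar>)"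
    and "AE \<omega> in M. \<forall>u\<in>{-r..0}. X \<omega> u \<ge> eta / (c_mu - (LINT u|lborel. \<bar>f_mu u\<bar>))"
  shows "\<forall>t>0. AE \<omega> in M. X \<omega> t \<ge> eta / (c_mu - (LINT u|lborel. \<bar>f_mu u\<bar>))"
proof (intro allI impI)
  fix t :: real assume t: "t > 0"
  from assms(20) assms(23) AE_space
  show "AE \<omega> in M. X \<omega> t \<ge> eta / (c_mu - (LINT u|lborel. \<bar>f_mu u\<bar>))"
  proof eventually_elim
    case (elim \<omega>)
    interpret dde p q r eta c_mu c_nu f_mu f_nu "sq_jump_sum (-r) (L \<omega>)" "X \<omega>"
      by unfold_locales (use assms elim in auto)
    show ?case using result t by simp
  qed
qed

end
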